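(* Let $P\subseteq\{3,4,5,\ldots,\infty\}$. For all $A,B\in\mathcal{F}_P$ (when $\infty\in P$), respectively all $A,B\in\mathcal{G}_P$ (when $\infty\notin P$), there exists $C$ in the same family together with epimorphisms $f_1\colon C\to A$ and $f_2\colon C\to B$ belonging to that family.
   Context: Graphs are finite with reflexive symmetric edge relations. An epimorphism $f\colon B\to A$ is a surjection such that $\langle a_1,a_2\rangle$ is an edge of $A$ iff there are $b_i\in f^{-1}(a_i)$ forming an edge of $B$. It is monotone if every fibre $f^{-1}(a)$ induces a connected subgraph. A finite tree is a finite connected graph without cycles of nontrivial edges; $\mathrm{ord}(a)$ is the number of neighbours of $a$ other than $a$, equivalently the number of components of $A\setminus\{a\}$. For a monotone epimorphism $f\colon B\to A$ of finite trees and $a\in A$ with $\mathrm{ord}(a)=n\ge 3$, with $A_0,\dots,A_{n-1}$ the components of $A\setminus\{a\}$: $a$ is a point of weak coherence of $f$ (witnessed by $b$) if there is $b\in f^{-1}(a)$ with $m=\mathrm{ord}(b)\ge n$ and an injection $p\colon n\to m$ such that $f^{-1}(A_i)\subseteq B_{p(i)}$ for all $i$, where $B_0,\dots,B_{m-1}$ are the components of $B\setminus\{b\}$; it is a point of coherence if moreover $m=n$ and $p$ is a bijection. $f$ is coherent if every $a$ with $\mathrm{ord}(a)\ge3$ is a point of coherence. If $\infty\in P$, $\mathcal{F}_P$ consists of the finite trees with no vertex of order $2$, with epimorphisms $f\colon B\to A$ that are monotone, coherent at each $a$ with $\mathrm{ord}(a)\in P$, and, at each $a$ with $\mathrm{ord}(a)\ge3$,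 $\mathrm{ord}(a)\notin P$, weakly coherent with a witness $b$ satisfying $\mathrm{ord}(b)\notin P$. If $\infty\notin P$, $\mathcal{G}_P$ consists of the finite trees each of whose vertices is an endpoint (order at most $1$) or has order in $P$, with the monotone coherent epimorphisms. *)

theory Defs
  imports Main "HOL-Library.Extended_Nat"
begin

type_synonym 'a graph = "'a set \<times> ('a \<times> 'a) set"

definition verts :: "'a graph \<Rightarrow> 'a set" where "verts G = fst G"
definition edges :: "'a graph \<Rightarrow> ('a \<times> 'a) set" where "edges G = snd G"

definition is_graph :: "'a graph \<Rightarrow> bool" where
  "is_graph G \<longleftrightarrow> finite (verts G) \<and> edges G \<subseteq> verts G \<times> verts G
     \<and> (\<forall>x\<in>verts G. (x, x) \<in> edges G)
     \<and> (\<forall>x y. (x, y) \<in> edges G \<longrightarrow> (y, x) \<in> edges G)"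

definition induced_rel :: "'a graph \<Rightarrow> 'a set \<Rightarrow> ('a \<times> 'a) set" where
  "induced_rel G S = {(x, y). x \<in> S \<and> y \<in> S \<and> (x, y) \<in> edges G}"

definition connected_in :: "'a graph \<Rightarrow> 'a set \<Rightarrow> bool" where
  "connected_in G S \<longleftrightarrow> S \<subseteq> verts G \<and>
     (\<forall>x\<in>S. \<forall>y\<in>S. (x, y) \<in> (induced_rel G S)\<^sup>*)"

definition components :: "'a graph \<Rightarrow> 'a set \<Rightarrow> 'a set set" where
  "components G S = (\<lambda>x. {y. (x, y) \<in> (induced_rel G S)\<^sup>*}) ` S"

definition has_cycle :: "'a graph \<Rightarrow> bool" where
  "has_cycle G \<longleftrightarrow> (\<exists>vs. length vs \<ge> 3 \<and> distinct vs \<and> set vs \<subseteq> verts G \<and>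
     (\<forall>i < length vs. (vs ! i, vs ! ((i + 1) mod length vs)) \<in> edges G))"

definition is_tree :: "'a graph \<Rightarrow> bool" where
  "is_tree G \<longleftrightarrow> is_graph G \<and> verts G \<noteq> {} \<and> connected_in G (verts G) \<and> \<not> has_cycle G"

definition ord :: "'a graph \<Rightarrow> 'a \<Rightarrow> nat" where
  "ord G a = card {x \<in> verts G. (a, x) \<in> edges G \<and> x \<noteq> a}"

definition epimorphism :: "('b \<Rightarrow> 'a) \<Rightarrow> 'b graph \<Rightarrow> 'a graph \<Rightarrow> bool" where
  "epimorphism f B A \<longleftrightarrow> f ` verts B = verts A \<and>
     (\<forall>a1\<in>verts A. \<forall>a2\<in>verts A. (a1, a2) \<in> edges A \<longleftrightarrow>
        (\<exists>b1\<in>verts B. \<exists>b2\<in>verts B. f b1 = a1 \<and> f b2 = a2 \<and> (b1, b2) \<in> edges B))"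

definition fibre :: "('b \<Rightarrow> 'a) \<Rightarrow> 'b graph \<Rightarrow> 'a set \<Rightarrow> 'b set" where
  "fibre f B X = {b \<in> verts B. f b \<in> X}"

definition monotone_epi :: "('b \<Rightarrow> 'a) \<Rightarrow> 'b graph \<Rightarrow> 'a graph \<Rightarrow> bool" where
  "monotone_epi f B A \<longleftrightarrow> epimorphism f B A \<and>
     (\<forall>a\<in>verts A. connected_in B (fibre f B {a}))"

text \<open>b witnesses that a is a point of weak coherence of f (components indexed directly
  by the components themselves rather than by 0..n-1).\<close>
definition weak_coherence_witness :: "('b \<Rightarrow> 'a) \<Rightarrow> 'b graph \<Rightarrow> 'a graph \<Rightarrow> 'a \<Rightarrow> 'b \<Rightarrow> bool" where
  "weak_coherence_witness f B A a b \<longleftrightarrow> b \<in> verts B \<and> f b = a \<and> ord B b \<ge> ord A a \<and>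
     (\<exists>p. p ` components A (verts A - {a}) \<subseteq> components B (verts B - {b}) \<and>
          inj_on p (components A (verts A - {a})) \<and>
          (\<forall>K\<in>components A (verts A - {a}). fibre f B K \<subseteq> p K))"

definition coherence_witness :: "('b \<Rightarrow> 'a) \<Rightarrow> 'b graph \<Rightarrow> 'a graph \<Rightarrow> 'a \<Rightarrow> 'b \<Rightarrow> bool" where
  "coherence_witness f B A a b \<longleftrightarrow> b \<in> verts B \<and> f b = a \<and> ord B b = ord A a \<and>
     (\<exists>p. bij_betw p (components A (verts A - {a})) (components B (verts B - {b})) \<and>
          (\<forall>K\<in>components A (verts A - {a}). fibre f B K \<subseteq> p K))"

definition point_of_weak_coherence :: "('b \<Rightarrow> 'a) \<Rightarrow> 'b graph \<Rightarrow> 'a graph \<Rightarrow> 'a \<Rightarrow> bool" where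
  "point_of_weak_coherence f B A a \<longleftrightarrow> (\<exists>b. weak_coherence_witness f B A a b)"

definition point_of_coherence :: "('b \<Rightarrow> 'a) \<Rightarrow> 'b graph \<Rightarrow> 'a graph \<Rightarrow> 'a \<Rightarrow> bool" where
  "point_of_coherence f B A a \<longleftrightarrow> (\<exists>b. coherence_witness f B A a b)"

definition coherent :: "('b \<Rightarrow> 'a) \<Rightarrow> 'b graph \<Rightarrow> 'a graph \<Rightarrow> bool" where
  "coherent f B A \<longleftrightarrow> (\<forall>a\<in>verts A. ord A a \<ge> 3 \<longrightarrow> point_of_coherence f B A a)"

definition F_obj :: "enat set \<Rightarrow> 'a graph \<Rightarrow> bool" where
  "F_obj P A \<longleftrightarrow> is_tree A \<and> (\<forall>a\<in>verts A. ord A a \<noteq> 2)"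

definition F_mor :: "enat set \<Rightarrow> ('b \<Rightarrow> 'a) \<Rightarrow> 'b graph \<Rightarrow> 'a graph \<Rightarrow> bool" where
  "F_mor P f B A \<longleftrightarrow> monotone_epi f B A \<and>
     (\<forall>a\<in>verts A. ord A a \<ge> 3 \<longrightarrow>
        (enat (ord A a) \<in> P \<longrightarrow> point_of_coherence f B A a) \<and>
        (enat (ord A a) \<notin> P \<longrightarrow>
           (\<exists>b. weak_coherence_witness f B A a b \<and> enat (ord B b) \<notin> P)))"

definition G_obj :: "enat set \<Rightarrow> 'a graph \<Rightarrow> bool" where
  "G_obj P A \<longleftrightarrow> is_tree A \<and> (\<forall>a\<in>verts A. ord A a \<le> 1 \<or> enat (ord A a) \<in> P)"

definition G_mor :: "enat set \<Rightarrow> ('b \<Rightarrow> 'a) \<Rightarrow> 'b graph \<Rightarrow> 'a graph \<Rightarrow> bool" where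
  "G_mor P f B A \<longleftrightarrow> monotone_epi f B A \<and> coherent f B A"

end

theory Submission
  imports Defs "HOL-Library.Transitive_Closure_Table"
begin

definition avoid :: "'a graph \<Rightarrow> 'a \<Rightarrow> 'a \<Rightarrow> ('a \<times> 'a) set" where
  "avoid G u v = {(p,q). (p,q) \<in> edges G \<and> {p,q} \<noteq> {u,v}}"

definition no_alt :: "'a graph \<Rightarrow> bool" where
  "no_alt G \<longleftrightarrow> (\<forall>u v. (u,v) \<in> edges G \<longrightarrow> u \<noteq> v \<longrightarrow> (v,u) \<notin> (avoid G u v)\<^sup>*)"

lemma rpath_nth: "rtrancl_path r x xs y \<Longrightarrow> i < length xs \<Longrightarrow> r ((x#xs)!i) (xs!i)"
proof (induction arbitrary: i rule: rtrancl_path.induct)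
  case (base x) then show ?case by simp
next
  case (step x y ys z)
  then show ?case by (cases i) auto
qed

lemma rpath_last: "rtrancl_path r x xs y \<Longrightarrow> last (x#xs) = y"
  by (induction rule: rtrancl_path.induct) auto

lemma graph_edge_verts: "is_graph G \<Longrightarrow> (x,y) \<in> edges G \<Longrightarrow> x \<in> verts G \<and> y \<in> verts G"
  unfolding is_graph_def by auto

lemma no_cycle_no_alt:
  assumes g: "is_graph G" and nc: "\<not> has_cycle G"
  shows "no_alt G"
  unfolding no_alt_def
proof (intro allI impI notI)
  fix u v assume e: "(u,v) \<in> edges G" and uv: "u \<noteq> v" and w: "(v,u) \<in> (avoid G u v)\<^sup>*"
  let ?r = "\<lambda>a b. (a,b) \<in> avoid G u v"
  have "?r\<^sup>*\<^sup>* v u" using w by (simp add: rtranclp_rtrancl_eq)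
  then obtain xs0 where "rtrancl_path ?r v xs0 u" by (auto simp: rtranclp_eq_rtrancl_path)
  then obtain xs where p: "rtrancl_path ?r v xs u" and d: "distinct (v#xs)"
    by (rule rtrancl_path_distinct)
  have ne: "xs \<noteq> []" using p uv rpath_last by fastforce
  have l: "last (v#xs) = u" using rpath_last[OF p] .
  have len: "length xs \<ge> 2"
  proof (rule ccontr)
    assume "\<not> length xs \<ge> 2"
    with ne have "length xs = 1" by (cases xs) (auto simp: Suc_le_eq)
    then obtain z where xz: "xs = [z]" by (cases xs) auto
    with l have "z = u" by simp
    with rpath_nth[OF p, of 0] xz have "(v,u) \<in> avoid G u v" by simp
    then show False unfolding avoid_def by (auto simp: insert_commute)
  qed
  let ?vs = "v#xs"
  have edg: "\<forall>i < length ?vs. (?vs ! i, ?vs ! ((i + 1) mod length ?vs)) \<in> edges G"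
  proof (intro allI impI)
    fix i assume i: "i < length ?vs"
    show "(?vs ! i, ?vs ! ((i + 1) mod length ?vs)) \<in> edges G"
    proof (cases "i < length xs")
      case True
      then have "(i+1) mod length ?vs = i + 1" by simp
      moreover have "?r (?vs!i) (xs!i)" using rpath_nth[OF p True] .
      ultimately show ?thesis unfolding avoid_def by simp
    next
      case False
      with i have ii: "i = length xs" by simp
      then have "(i+1) mod length ?vs = 0" by simp
      moreover have "?vs ! i = u" using l ne ii by (simp add: last_conv_nth)
      ultimately show ?thesis using e graph_edge_verts[OF g e] g unfolding is_graph_def by auto
    qed
  qed
  have sub: "set ?vs \<subseteq> verts G"
  proof
    fix x assume "x \<in> set ?vs"
    then obtain i where i: "i < length ?vs" "x = ?vs ! i" by (metis in_set_conv_nth)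
    from edg i have "(x, ?vs ! ((i + 1) mod length ?vs)) \<in> edges G" by auto
    then show "x \<in> verts G" using graph_edge_verts[OF g] by blast
  qed
  have "has_cycle G" unfolding has_cycle_def
    using len d sub edg by (intro exI[of _ ?vs]) auto
  with nc show False by simp
qed

lemma cycle_not_no_alt:
  assumes hc: "has_cycle G"
  shows "\<not> no_alt G"
proof -
  from hc obtain vs where len: "length vs \<ge> 3" and d: "distinct vs"
    and e: "\<forall>i < length vs. (vs ! i, vs ! ((i + 1) mod length vs)) \<in> edges G"
    unfolding has_cycle_def by blast
  define n where "n = length vs"
  have n3: "n \<ge> 3" using len n_def by simp
  have eq: "\<And>i j. i < n \<Longrightarrow> j < n \<Longrightarrow> vs!i = vs!j \<longleftrightarrow> i = j"
    using d n_def by (simp add: nth_eq_iff_index_eq)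
  let ?u = "vs!0" and ?v = "vs!1"
  have m1: "(0+1) mod length vs = 1" using n3 n_def by simp
  have uv: "(?u,?v) \<in> edges G" using e[rule_format, of 0] n3 n_def m1 by (metis gr_zeroI not_numeral_le_zero)
  have uv2: "?u \<noteq> ?v" using eq[of 0 1] n3 by simp
  have st: "\<And>k. 1 \<le> k \<Longrightarrow> k \<le> n - 1 \<Longrightarrow> (?v, vs!k) \<in> (avoid G ?u ?v)\<^sup>*"
  proof -
    fix k show "1 \<le> k \<Longrightarrow> k \<le> n - 1 \<Longrightarrow> (?v, vs!k) \<in> (avoid G ?u ?v)\<^sup>*"
    proof (induction k)
      case 0 then show ?case by simp
    next
      case (Suc k)
      show ?case
      proof (cases "k = 0")
        case True then show ?thesis by simp
      next
        case False
        then have IH: "(?v, vs!k) \<in> (avoid G ?u ?v)\<^sup>*" using Suc by simp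
        have kn: "Suc k < n" using Suc n3 by simp
        have ed: "(vs!k, vs!(Suc k)) \<in> edges G" using e[rule_format, of k] kn n_def by simp
        have "{vs!k, vs!(Suc k)} \<noteq> {?u, ?v}"
        proof
          assume a: "{vs!k, vs!(Suc k)} = {?u, ?v}"
          have "vs!k \<noteq> ?u" using eq[of k 0] False kn by simp
          moreover have "vs!(Suc k) \<noteq> ?u" using eq[of "Suc k" 0] kn by simp
          ultimately show False using a by (auto simp: doubleton_eq_iff)
        qed
        with ed have "(vs!k, vs!(Suc k)) \<in> avoid G ?u ?v" unfolding avoid_def by simp
        with IH show ?thesis by (rule rtrancl_into_rtrancl)
      qed
    qed
  qed
  have a1: "(?v, vs!(n-1)) \<in> (avoid G ?u ?v)\<^sup>*" using st[of "n-1"] n3 by simp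
  have m2: "(n-1+1) mod length vs = 0" proof - have "n-1+1 = length vs" using n3 n_def by simp then show ?thesis by simp qed
  have ed: "(vs!(n-1), vs!0) \<in> edges G" using e[rule_format, of "n-1"] n3 n_def m2 by simp
  have "vs!(n-1) \<noteq> ?u" "vs!(n-1) \<noteq> ?v" using eq[of "n-1" 0] eq[of "n-1" 1] n3 by auto
  then have "{vs!(n-1), vs!0} \<noteq> {?u, ?v}" by (auto simp: doubleton_eq_iff)
  with ed have "(vs!(n-1), vs!0) \<in> avoid G ?u ?v" unfolding avoid_def by simp
  with a1 have "(?v, ?u) \<in> (avoid G ?u ?v)\<^sup>*" by (rule rtrancl_into_rtrancl)
  with uv uv2 show ?thesis unfolding no_alt_def by blast
qed


definition uniq_lift :: "('b \<Rightarrow> 'a) \<Rightarrow> 'b graph \<Rightarrow> bool" where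
  "uniq_lift f C \<longleftrightarrow> (\<forall>p q p' q'. (p,q) \<in> edges C \<longrightarrow> (p',q') \<in> edges C \<longrightarrow>
      f p = f p' \<longrightarrow> f q = f q' \<longrightarrow> f p \<noteq> f q \<longrightarrow> p = p' \<and> q = q')"

locale nice =
  fixes f :: "'b \<Rightarrow> 'a" and C :: "'b graph" and A :: "'a graph"
  assumes gC: "is_graph C" and gA: "is_graph A" and me: "monotone_epi f C A"
    and ul: "uniq_lift f C"
begin

lemma epi: "epimorphism f C A" using me unfolding monotone_epi_def by simp

lemma img: "f ` verts C = verts A" using epi unfolding epimorphism_def by simp

lemma edge_map: "(p,q) \<in> edges C \<Longrightarrow> (f p, f q) \<in> edges A"
proof -
  assume e: "(p,q) \<in> edges C"
  then have pq: "p \<in> verts C" "q \<in> verts C" using graph_edge_verts[OF gC] by auto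
  then have "f p \<in> verts A" "f q \<in> verts A" using img by auto
  then show ?thesis using epi e pq unfolding epimorphism_def by blast
qed

lemma edge_lift: "(a,a') \<in> edges A \<Longrightarrow> \<exists>b1\<in>verts C. \<exists>b2\<in>verts C. f b1 = a \<and> f b2 = a' \<and> (b1,b2) \<in> edges C"
proof -
  assume e: "(a,a') \<in> edges A"
  then have "a \<in> verts A" "a' \<in> verts A" using graph_edge_verts[OF gA] by auto
  then show ?thesis using epi e unfolding epimorphism_def by blast
qed

lemma fib_conn: "a \<in> verts A \<Longrightarrow> connected_in C (fibre f C {a})"
  using me unfolding monotone_epi_def by simp

lemma ord_eq:
  assumes a: "a \<in> verts A" and fb: "fibre f C {a} = {c}"
  shows "ord C c = ord A a"
proof -
  have c: "c \<in> verts C" "f c = a" using fb unfolding fibre_def by auto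
  let ?NC = "{x \<in> verts C. (c, x) \<in> edges C \<and> x \<noteq> c}"
  let ?NA = "{x \<in> verts A. (a, x) \<in> edges A \<and> x \<noteq> a}"
  have nf: "\<And>x. x \<in> verts C \<Longrightarrow> x \<noteq> c \<Longrightarrow> f x \<noteq> a"
    using fb unfolding fibre_def by blast
  have "bij_betw f ?NC ?NA"
  proof (rule bij_betw_imageI)
    show "inj_on f ?NC"
    proof (rule inj_onI)
      fix x y assume x: "x \<in> ?NC" and y: "y \<in> ?NC" and xy: "f x = f y"
      have "f c \<noteq> f x" using x nf[of x] c by simp
      then show "x = y" using ul x y xy unfolding uniq_lift_def by blast
    qed
    show "f ` ?NC = ?NA"
    proof
      show "f ` ?NC \<subseteq> ?NA" using edge_map img nf c by auto
      show "?NA \<subseteq> f ` ?NC"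
      proof
        fix x assume x: "x \<in> ?NA"
        then obtain b1 b2 where b: "b1 \<in> verts C" "b2 \<in> verts C" "f b1 = a" "f b2 = x" "(b1,b2) \<in> edges C"
          using edge_lift by blast
        then have "b1 = c" using fb unfolding fibre_def by blast
        moreover have "b2 \<noteq> c" using b x c by auto
        ultimately show "x \<in> f ` ?NC" using b by auto
      qed
    qed
  qed
  then show ?thesis unfolding ord_def by (rule bij_betw_same_card)
qed

lemma induced_sub: "induced_rel G S \<subseteq> S \<times> S" unfolding induced_rel_def by auto

lemma rtr_in: "(x,y) \<in> (induced_rel G S)\<^sup>* \<Longrightarrow> x \<in> S \<Longrightarrow> y \<in> S"
  by (induction rule: rtrancl_induct) (auto simp: induced_rel_def)

lemma induced_mono: "S \<subseteq> T \<Longrightarrow> (x,y) \<in> (induced_rel G S)\<^sup>* \<Longrightarrow> (x,y) \<in> (induced_rel G T)\<^sup>*"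
proof -
  assume "S \<subseteq> T"
  then have "induced_rel G S \<subseteq> induced_rel G T" unfolding induced_rel_def by auto
  then show "(x,y) \<in> (induced_rel G S)\<^sup>* \<Longrightarrow> (x,y) \<in> (induced_rel G T)\<^sup>*" using rtrancl_mono by blast
qed

lemma comps:
  assumes a: "a \<in> verts A" and fb: "fibre f C {a} = {c}"
  shows "components C (verts C - {c}) = fibre f C ` components A (verts A - {a})"
proof -
  have c: "c \<in> verts C" "f c = a" using fb unfolding fibre_def by auto
  have nf: "\<And>x. x \<in> verts C \<Longrightarrow> x \<noteq> c \<Longrightarrow> f x \<noteq> a"
    using fb unfolding fibre_def by blast
  let ?SC = "verts C - {c}" and ?SA = "verts A - {a}"
  let ?RC = "induced_rel C ?SC" and ?RA = "induced_rel A ?SA"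
  have X1: "(x,y) \<in> ?RC\<^sup>* \<Longrightarrow> (f x, f y) \<in> ?RA\<^sup>*" for x y
  proof (induction rule: rtrancl_induct)
    case base then show ?case by simp
  next
    case (step y z)
    then have "y \<in> ?SC" "z \<in> ?SC" "(y,z) \<in> edges C" unfolding induced_rel_def by auto
    then have "(f y, f z) \<in> ?RA" using edge_map[of y z] img nf[of y] nf[of z] unfolding induced_rel_def by auto
    with step show ?case by simp
  qed
  have X2: "(p,q) \<in> ?RA\<^sup>* \<Longrightarrow> x \<in> verts C \<Longrightarrow> f x = p \<Longrightarrow> p \<in> ?SA \<Longrightarrow>
       (\<forall>y \<in> verts C. f y = q \<longrightarrow> (x,y) \<in> ?RC\<^sup>*)" for p q x
  proof (induction rule: rtrancl_induct)
    case base
    show ?case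
    proof (intro ballI impI)
      fix y assume y: "y \<in> verts C" "f y = p"
      have "connected_in C (fibre f C {p})" using fib_conn base by simp
      moreover have "x \<in> fibre f C {p}" "y \<in> fibre f C {p}" using base y unfolding fibre_def by auto
      ultimately have xy: "(x,y) \<in> (induced_rel C (fibre f C {p}))\<^sup>*" unfolding connected_in_def by blast
      have "fibre f C {p} \<subseteq> ?SC" using base c unfolding fibre_def by auto
      from induced_mono[OF this xy] show "(x,y) \<in> ?RC\<^sup>*" .
    qed
  next
    case (step q r)
    have qr: "q \<in> ?SA" "r \<in> ?SA" "(q,r) \<in> edges A" using step(2) unfolding induced_rel_def by auto
    then obtain b1 b2 where b: "b1 \<in> verts C" "b2 \<in> verts C" "f b1 = q" "f b2 = r" "(b1,b2) \<in> edges C"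
      using edge_lift by blast
    have xb1: "(x,b1) \<in> ?RC\<^sup>*" using step.IH[OF step.prems] b by simp
    have "b1 \<noteq> c" "b2 \<noteq> c" using b qr c by auto
    then have "(b1,b2) \<in> ?RC" using b unfolding induced_rel_def by auto
    with xb1 have xb2: "(x,b2) \<in> ?RC\<^sup>*" by simp
    show ?case
    proof (intro ballI impI)
      fix y assume y: "y \<in> verts C" "f y = r"
      have "connected_in C (fibre f C {r})" using fib_conn qr by simp
      moreover have "b2 \<in> fibre f C {r}" "y \<in> fibre f C {r}" using b y unfolding fibre_def by auto
      ultimately have by2: "(b2,y) \<in> (induced_rel C (fibre f C {r}))\<^sup>*" unfolding connected_in_def by blast
      have "fibre f C {r} \<subseteq> ?SC" using qr c unfolding fibre_def by auto
      from induced_mono[OF this by2] have "(b2,y) \<in> ?RC\<^sup>*" .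
      with xb2 show "(x,y) \<in> ?RC\<^sup>*" by simp
    qed
  qed
  have cx: "{y. (x,y) \<in> ?RC\<^sup>*} = fibre f C {y. (f x, y) \<in> ?RA\<^sup>*}" if x: "x \<in> ?SC" for x
  proof
    have fx: "f x \<in> ?SA" using x img nf by auto
    show "{y. (x,y) \<in> ?RC\<^sup>*} \<subseteq> fibre f C {y. (f x, y) \<in> ?RA\<^sup>*}"
    proof
      fix y assume "y \<in> {y. (x,y) \<in> ?RC\<^sup>*}"
      then have y: "(x,y) \<in> ?RC\<^sup>*" by simp
      then have "y \<in> ?SC" using rtr_in x by fast
      then show "y \<in> fibre f C {y. (f x, y) \<in> ?RA\<^sup>*}" using X1[OF y] unfolding fibre_def by auto
    qed
    show "fibre f C {y. (f x, y) \<in> ?RA\<^sup>*} \<subseteq> {y. (x,y) \<in> ?RC\<^sup>*}"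
    proof
      fix y assume "y \<in> fibre f C {y. (f x, y) \<in> ?RA\<^sup>*}"
      then have y: "y \<in> verts C" "(f x, f y) \<in> ?RA\<^sup>*" unfolding fibre_def by auto
      show "y \<in> {y. (x,y) \<in> ?RC\<^sup>*}" using X2[OF y(2)] x fx y(1) by auto
    qed
  qed
  show ?thesis
  proof
    show "components C ?SC \<subseteq> fibre f C ` components A ?SA"
    proof
      fix K assume "K \<in> components C ?SC"
      then obtain x where x: "x \<in> ?SC" "K = {y. (x,y) \<in> ?RC\<^sup>*}" unfolding components_def by auto
      have "f x \<in> ?SA" using x img nf[of x] by auto
      then have "{y. (f x, y) \<in> ?RA\<^sup>*} \<in> components A ?SA" unfolding components_def by auto
      then show "K \<in> fibre f C ` components A ?SA" using cx[OF x(1)] x(2) by auto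
    qed
    show "fibre f C ` components A ?SA \<subseteq> components C ?SC"
    proof
      fix K assume "K \<in> fibre f C ` components A ?SA"
      then obtain p where p: "p \<in> ?SA" "K = fibre f C {y. (p, y) \<in> ?RA\<^sup>*}" unfolding components_def by auto
      then obtain x where x: "x \<in> verts C" "f x = p" using img by (metis DiffD1 imageE)
      then have "x \<in> ?SC" using p c by auto
      then have "K = {y. (x,y) \<in> ?RC\<^sup>*}" using cx[of x] p x by simp
      then show "K \<in> components C ?SC" using \<open>x \<in> ?SC\<close> unfolding components_def by blast
    qed
  qed
qed

lemma comps_sub: "K \<in> components G S \<Longrightarrow> K \<subseteq> S"
proof
  fix y assume K: "K \<in> components G S" and y: "y \<in> K"
  from K obtain x where x: "x \<in> S" "K = {y. (x,y) \<in> (induced_rel G S)\<^sup>*}" unfolding components_def by blast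
  with y have "(x,y) \<in> (induced_rel G S)\<^sup>*" by simp
  from rtr_in[OF this x(1)] show "y \<in> S" .
qed

lemma coh:
  assumes a: "a \<in> verts A" and fb: "fibre f C {a} = {c}"
  shows "coherence_witness f C A a c"
proof -
  have c: "c \<in> verts C" "f c = a" using fb unfolding fibre_def by auto
  have inj: "inj_on (fibre f C) (components A (verts A - {a}))"
  proof (rule inj_onI)
    fix K K' assume K: "K \<in> components A (verts A - {a})" and K': "K' \<in> components A (verts A - {a})"
      and eq: "fibre f C K = fibre f C K'"
    have "K = f ` fibre f C K" using comps_sub[OF K] img unfolding fibre_def by auto
    moreover have "K' = f ` fibre f C K'" using comps_sub[OF K'] img unfolding fibre_def by auto
    ultimately show "K = K'" using eq by simp
  qed
  have "bij_betw (fibre f C) (components A (verts A - {a})) (components C (verts C - {c}))"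
    using inj comps[OF a fb] unfolding bij_betw_def by simp
  then show ?thesis unfolding coherence_witness_def using c ord_eq[OF a fb] by blast
qed

lemma no_alt_transfer:
  assumes na: "no_alt A" and e: "(u,v) \<in> edges C" and d: "f u \<noteq> f v"
  shows "(v,u) \<notin> (avoid C u v)\<^sup>*"
proof
  assume w: "(v,u) \<in> (avoid C u v)\<^sup>*"
  have "(x,y) \<in> (avoid C u v)\<^sup>* \<Longrightarrow> (f x, f y) \<in> (avoid A (f u) (f v))\<^sup>*" for x y
  proof (induction rule: rtrancl_induct)
    case base then show ?case by simp
  next
    case (step y z)
    then have yz: "(y,z) \<in> edges C" "{y,z} \<noteq> {u,v}" unfolding avoid_def by auto
    have "{f y, f z} \<noteq> {f u, f v}"
    proof
      assume a: "{f y, f z} = {f u, f v}"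
      then consider "f y = f u \<and> f z = f v" | "f y = f v \<and> f z = f u" by (auto simp: doubleton_eq_iff)
      then show False
      proof cases
        case 1
        then have "y = u \<and> z = v" using ul yz e d unfolding uniq_lift_def by metis
        then show False using yz by simp
      next
        case 2
        have "(z,y) \<in> edges C" using gC yz unfolding is_graph_def by blast
        then have "z = u \<and> y = v" using ul 2 e d unfolding uniq_lift_def by metis
        then show False using yz by (auto simp: insert_commute)
      qed
    qed
    then have "(f y, f z) \<in> avoid A (f u) (f v)" using edge_map[OF yz(1)] unfolding avoid_def by simp
    with step show ?case by simp
  qed
  from this[OF w] have "(f v, f u) \<in> (avoid A (f u) (f v))\<^sup>*" .
  moreover have "(f u, f v) \<in> edges A" using edge_map[OF e] .
  ultimately show False using na d unfolding no_alt_def by blast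
qed

end


lemma step_out: "(u,v) \<in> R\<^sup>* \<Longrightarrow> u \<noteq> v \<Longrightarrow> \<exists>w. (u,w) \<in> R \<and> w \<noteq> u"
proof (induction rule: converse_rtrancl_induct)
  case base then show ?case by simp
next
  case (step y z)
  then show ?case by (cases "z = y") auto
qed

definition ispath :: "'a graph \<Rightarrow> 'a list \<Rightarrow> bool" where
  "ispath G vs \<longleftrightarrow> distinct vs \<and> set vs \<subseteq> verts G \<and> (\<forall>i. Suc i < length vs \<longrightarrow> (vs!i, vs!Suc i) \<in> edges G)"

lemma leaf_exists:
  assumes t: "is_tree G" and u: "u \<in> verts G" and v: "v \<in> verts G" and uv: "u \<noteq> v"
  shows "\<exists>e w. e \<in> verts G \<and> w \<in> verts G \<and> e \<noteq> w \<and> (e,w) \<in> edges G \<and> (\<forall>x. (e,x) \<in> edges G \<longrightarrow> x = e \<or> x = w)"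
proof -
  have g: "is_graph G" and c: "connected_in G (verts G)" and nc: "\<not> has_cycle G" and fin: "finite (verts G)"
    using t unfolding is_tree_def is_graph_def by auto
  have sym: "\<And>x y. (x,y) \<in> edges G \<Longrightarrow> (y,x) \<in> edges G" using g unfolding is_graph_def by blast
  have "\<forall>x\<in>verts G. \<forall>y\<in>verts G. (x, y) \<in> (induced_rel G (verts G))\<^sup>*" using c unfolding connected_in_def by simp
  then have "(u,v) \<in> (induced_rel G (verts G))\<^sup>*" using u v by simp
  from step_out[OF this uv] obtain w where "(u,w) \<in> induced_rel G (verts G)" "w \<noteq> u" by blast
  then have uw: "(u,w) \<in> edges G" "w \<in> verts G" "w \<noteq> u" unfolding induced_rel_def by auto
  let ?P = "\<lambda>k. \<exists>vs. ispath G vs \<and> length vs = k"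
  have P2: "?P 2" using uw u unfolding ispath_def
    by (intro exI[of _ "[u,w]"]) (auto simp: less_Suc_eq)
  have bnd: "\<forall>k. ?P k \<longrightarrow> k \<le> card (verts G)"
  proof (intro allI impI)
    fix k assume "?P k"
    then obtain vs where "ispath G vs" "length vs = k" by blast
    then show "k \<le> card (verts G)" unfolding ispath_def
      using card_mono[OF fin] distinct_card by metis
  qed
  obtain k where Pk: "?P k" and kmax: "\<forall>y. ?P y \<longrightarrow> y \<le> k"
    using Nat.ex_has_greatest_nat[of ?P 2, OF P2 bnd] by blast
  then obtain vs where p: "ispath G vs" and lk: "length vs = k" by blast
  have k2: "k \<ge> 2" using kmax P2 by blast
  have d: "distinct vs" and sv: "set vs \<subseteq> verts G" and pe: "\<And>i. Suc i < length vs \<Longrightarrow> (vs!i, vs!Suc i) \<in> edges G"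
    using p unfolding ispath_def by auto
  have "vs!0 \<in> set vs" "vs!1 \<in> set vs" using k2 lk by (auto intro!: nth_mem)
  then have e0: "vs!0 \<in> verts G" "vs!1 \<in> verts G" using sv by auto
  have e01: "vs!0 \<noteq> vs!1" using d k2 lk by (simp add: nth_eq_iff_index_eq)
  have ed: "(vs!0, vs!1) \<in> edges G" using pe[of 0] k2 lk by simp
  have leaf: "\<forall>x. (vs!0,x) \<in> edges G \<longrightarrow> x = vs!0 \<or> x = vs!1"
  proof (intro allI impI)
    fix x assume ex: "(vs!0,x) \<in> edges G"
    show "x = vs!0 \<or> x = vs!1"
    proof (rule ccontr)
      assume nx: "\<not> (x = vs!0 \<or> x = vs!1)"
      show False
      proof (cases "x \<in> set vs")
        case False
        have xv: "x \<in> verts G" using ex graph_edge_verts[OF g] by blast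
        have "ispath G (x # vs)" unfolding ispath_def
        proof (intro conjI allI impI)
          show "distinct (x # vs)" using d False by simp
          show "set (x # vs) \<subseteq> verts G" using sv xv by simp
          fix i assume i: "Suc i < length (x # vs)"
          show "((x # vs) ! i, (x # vs) ! Suc i) \<in> edges G"
          proof (cases i)
            case 0 then show ?thesis using sym[OF ex] by simp
          next
            case (Suc j) then show ?thesis using pe[of j] i by simp
          qed
        qed
        then have "?P (Suc k)" using lk by (intro exI[of _ "x # vs"]) simp
        then show False using kmax by fastforce
      next
        case True
        then obtain j where j: "j < length vs" "x = vs!j" by (metis in_set_conv_nth)
        then have j2: "j \<ge> 2" using nx by (cases j; cases "j - 1") auto
        let ?cs = "take (Suc j) vs"
        have lc: "length ?cs = Suc j" using j by simp
        have "has_cycle G" unfolding has_cycle_def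
        proof (intro exI[of _ ?cs] conjI allI impI)
          show "3 \<le> length ?cs" using lc j2 by simp
          show "distinct ?cs" using d by simp
          show "set ?cs \<subseteq> verts G" using sv set_take_subset by fast
          fix i assume i: "i < length ?cs"
          show "(?cs ! i, ?cs ! ((i + 1) mod length ?cs)) \<in> edges G"
          proof (cases "i < j")
            case True
            then have "(i + 1) mod length ?cs = Suc i" using lc by simp
            then show ?thesis using pe[of i] True j by simp
          next
            case False
            then have ij: "i = j" using i lc by simp
            then have "(i + 1) mod length ?cs = 0" using lc by simp
            then show ?thesis using sym[OF ex] ij j by simp
          qed
        qed
        with nc show False by simp
      qed
    qed
  qed
  show ?thesis using e0 e01 ed leaf by blast
qed

lemma leaf_ord: "is_graph G \<Longrightarrow> e \<noteq> w \<Longrightarrow> (e,w) \<in> edges G \<Longrightarrow> (\<forall>x. (e,x) \<in> edges G \<longrightarrow> x = e \<or> x = w) \<Longrightarrow> ord G e = 1"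
proof -
  assume g: "is_graph G" and ew: "e \<noteq> w" "(e,w) \<in> edges G" and l: "\<forall>x. (e,x) \<in> edges G \<longrightarrow> x = e \<or> x = w"
  have "{x \<in> verts G. (e, x) \<in> edges G \<and> x \<noteq> e} = {w}"
    using ew l graph_edge_verts[OF g ew(2)] by auto
  then show ?thesis unfolding ord_def by simp
qed


lemma rtr_map: "(\<And>x y. (x,y) \<in> R \<Longrightarrow> (h x, h y) \<in> R') \<Longrightarrow> (x,y) \<in> R\<^sup>* \<Longrightarrow> (h x, h y) \<in> R'\<^sup>*"
proof -
  assume m: "\<And>x y. (x,y) \<in> R \<Longrightarrow> (h x, h y) \<in> R'"
  show "(x,y) \<in> R\<^sup>* \<Longrightarrow> (h x, h y) \<in> R'\<^sup>*"
  proof (induction rule: rtrancl_induct)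
    case base then show ?case by simp
  next
    case (step y z) then show ?case using m[of y z] by (meson rtrancl_into_rtrancl)
  qed
qed

lemma rtr_sym: "(\<And>x y. (x,y) \<in> R \<Longrightarrow> (y,x) \<in> R) \<Longrightarrow> (x,y) \<in> R\<^sup>* \<Longrightarrow> (y,x) \<in> R\<^sup>*"
proof -
  assume m: "\<And>x y. (x,y) \<in> R \<Longrightarrow> (y,x) \<in> R"
  show "(x,y) \<in> R\<^sup>* \<Longrightarrow> (y,x) \<in> R\<^sup>*"
  proof (induction rule: rtrancl_induct)
    case base then show ?case by simp
  next
    case (step y z) then show ?case using m[of y z] by (meson converse_rtrancl_into_rtrancl)
  qed
qed

lemma leaf_removal:
  assumes g: "is_graph G" and c: "connected_in G (verts G)" and w: "w \<in> verts G" "w \<noteq> e"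
    and l: "\<forall>x. (e,x) \<in> edges G \<longrightarrow> x = e \<or> x = w"
    and x: "x \<in> verts G - {e}" and y: "y \<in> verts G - {e}"
  shows "(x,y) \<in> (induced_rel G (verts G - {e}))\<^sup>*"
proof -
  have "\<forall>x\<in>verts G. \<forall>y\<in>verts G. (x, y) \<in> (induced_rel G (verts G))\<^sup>*" using c unfolding connected_in_def by simp
  then have xy: "(x,y) \<in> (induced_rel G (verts G))\<^sup>*" using x y by simp
  define r where "r = (\<lambda>z. if z = e then w else z)"
  have sym: "\<And>x y. (x,y) \<in> edges G \<Longrightarrow> (y,x) \<in> edges G" using g unfolding is_graph_def by blast
  have refl: "(w,w) \<in> edges G" using g w unfolding is_graph_def by blast
  have "(r p, r q) \<in> induced_rel G (verts G - {e})" if pq: "(p,q) \<in> induced_rel G (verts G)" for p q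
  proof -
    have pq': "p \<in> verts G" "q \<in> verts G" "(p,q) \<in> edges G" using pq unfolding induced_rel_def by auto
    show ?thesis
    proof (cases "p = e")
      case True
      then have "q = e \<or> q = w" using l pq' by blast
      then show ?thesis using True refl w unfolding r_def induced_rel_def by auto
    next
      case False
      show ?thesis
      proof (cases "q = e")
        case True
        then have "p = e \<or> p = w" using l sym[OF pq'(3)] by blast
        then show ?thesis using True False refl w unfolding r_def induced_rel_def by auto
      next
        case False2: False
        then show ?thesis using False pq' unfolding r_def induced_rel_def by auto
      qed
    qed
  qed
  from rtr_map[of "induced_rel G (verts G)" r, OF this xy] show ?thesis
    using x y unfolding r_def by simp
qed

definition emb :: "('a \<Rightarrow> nat) \<Rightarrow> 'a \<Rightarrow> nat \<Rightarrow> 'a \<Rightarrow> nat" where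
  "emb i e t x = (if x = e then t else i x)"

definition glueG :: "'a graph \<Rightarrow> 'a \<Rightarrow> 'a \<Rightarrow> ('a \<Rightarrow> nat) \<Rightarrow> 'b graph \<Rightarrow> 'b \<Rightarrow> 'b \<Rightarrow> ('b \<Rightarrow> nat) \<Rightarrow> nat graph" where
  "glueG A eA a1 iA B eB b1 iB =
     (iA ` (verts A - {eA}) \<union> iB ` (verts B - {eB}),
      map_prod (emb iA eA (iB b1)) (emb iA eA (iB b1)) ` edges A \<union>
      map_prod (emb iB eB (iA a1)) (emb iB eB (iA a1)) ` edges B)"

definition proj :: "'a graph \<Rightarrow> 'a \<Rightarrow> ('a \<Rightarrow> nat) \<Rightarrow> nat \<Rightarrow> 'a" where
  "proj A eA iA n = (if n \<in> iA ` (verts A - {eA}) then inv_into (verts A - {eA}) iA n else eA)"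

lemma glue_sym: "glueG A eA a1 iA B eB b1 iB = glueG B eB b1 iB A eA a1 iA"
  unfolding glueG_def by (simp add: Un_commute)

locale glue_setup =
  fixes A :: "'a graph" and eA a1 :: 'a and iA :: "'a \<Rightarrow> nat"
    and B :: "'b graph" and eB b1 :: 'b and iB :: "'b \<Rightarrow> nat"
  assumes tA: "is_tree A" and eA: "eA \<in> verts A" and a1: "a1 \<in> verts A" and ea1: "eA \<noteq> a1"
    and eda: "(eA, a1) \<in> edges A" and leafA: "\<forall>x. (eA,x) \<in> edges A \<longrightarrow> x = eA \<or> x = a1"
    and tB: "is_tree B" and eB: "eB \<in> verts B" and b1: "b1 \<in> verts B" and eb1: "eB \<noteq> b1"
    and edb: "(eB, b1) \<in> edges B" and leafB: "\<forall>x. (eB,x) \<in> edges B \<longrightarrow> x = eB \<or> x = b1"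
    and injA: "inj_on iA (verts A)" and injB: "inj_on iB (verts B)"
    and disj: "iA ` verts A \<inter> iB ` verts B = {}"
begin

lemma swap: "glue_setup B eB b1 iB A eA a1 iA"
  using glue_setup_axioms unfolding glue_setup_def by (auto simp: Int_commute)

abbreviation "C \<equiv> glueG A eA a1 iA B eB b1 iB"
abbreviation "f1 \<equiv> proj A eA iA"
abbreviation "\<iota>A \<equiv> emb iA eA (iB b1)"
abbreviation "\<iota>B \<equiv> emb iB eB (iA a1)"

lemma gA: "is_graph A" using tA unfolding is_tree_def by simp
lemma gB: "is_graph B" using tB unfolding is_tree_def by simp

lemma VC: "verts C = iA ` (verts A - {eA}) \<union> iB ` (verts B - {eB})"
  unfolding glueG_def verts_def by simp
lemma EC: "edges C = map_prod \<iota>A \<iota>A ` edges A \<union> map_prod \<iota>B \<iota>B ` edges B"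
  unfolding glueG_def edges_def by simp

lemma iB_notA: "b \<in> verts B \<Longrightarrow> iB b \<notin> iA ` verts A"
  using disj by blast

lemma f1_iA: "a \<in> verts A - {eA} \<Longrightarrow> f1 (iA a) = a"
  unfolding proj_def using injA by (simp add: inv_into_f_f inj_on_diff)

lemma f1_iB: "b \<in> verts B \<Longrightarrow> f1 (iB b) = eA"
  unfolding proj_def using iB_notA[of b] by auto

lemma iotaA_V: "x \<in> verts A \<Longrightarrow> \<iota>A x \<in> verts C"
  unfolding VC emb_def using b1 eb1 by auto

lemma iotaB_V: "y \<in> verts B \<Longrightarrow> \<iota>B y \<in> verts C"
  unfolding VC emb_def using a1 ea1 by auto

lemma f1_iotaA: "x \<in> verts A \<Longrightarrow> f1 (\<iota>A x) = x"
  unfolding emb_def using f1_iA f1_iB b1 by auto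

lemma f1_iotaB: "y \<in> verts B \<Longrightarrow> f1 (\<iota>B y) = (if y = eB then a1 else eA)"
  unfolding emb_def using f1_iA f1_iB a1 ea1 by auto

lemma f1_V: "n \<in> verts C \<Longrightarrow> f1 n \<in> verts A"
proof -
  assume "n \<in> verts C"
  then consider a where "a \<in> verts A - {eA}" "n = iA a" | b where "b \<in> verts B - {eB}" "n = iB b"
    unfolding VC by blast
  then show ?thesis
  proof cases
    case 1 then show ?thesis using f1_iA[OF 1(1)] by simp
  next
    case 2 then show ?thesis using f1_iB[of b] eA by simp
  qed
qed

lemma edgeA_V: "(x,y) \<in> edges A \<Longrightarrow> x \<in> verts A \<and> y \<in> verts A" using graph_edge_verts[OF gA] .
lemma edgeB_V: "(x,y) \<in> edges B \<Longrightarrow> x \<in> verts B \<and> y \<in> verts B" using graph_edge_verts[OF gB] .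

lemma symA: "(x,y) \<in> edges A \<Longrightarrow> (y,x) \<in> edges A" using gA unfolding is_graph_def by blast
lemma symB: "(x,y) \<in> edges B \<Longrightarrow> (y,x) \<in> edges B" using gB unfolding is_graph_def by blast
lemma reflA: "x \<in> verts A \<Longrightarrow> (x,x) \<in> edges A" using gA unfolding is_graph_def by blast
lemma reflB: "x \<in> verts B \<Longrightarrow> (x,x) \<in> edges B" using gB unfolding is_graph_def by blast

lemma edgeCA: "(p,q) \<in> edges A \<Longrightarrow> (\<iota>A p, \<iota>A q) \<in> edges C"
proof -
  assume e: "(p,q) \<in> edges A"
  have "(\<iota>A p, \<iota>A q) = map_prod \<iota>A \<iota>A (p,q)" by simp
  then have "(\<iota>A p, \<iota>A q) \<in> map_prod \<iota>A \<iota>A ` edges A" using e by (rule image_eqI)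
  then show ?thesis unfolding EC by (rule UnI1)
qed

lemma edgeCB: "(p,q) \<in> edges B \<Longrightarrow> (\<iota>B p, \<iota>B q) \<in> edges C"
proof -
  assume e: "(p,q) \<in> edges B"
  have "(\<iota>B p, \<iota>B q) = map_prod \<iota>B \<iota>B (p,q)" by simp
  then have "(\<iota>B p, \<iota>B q) \<in> map_prod \<iota>B \<iota>B ` edges B" using e by (rule image_eqI)
  then show ?thesis unfolding EC by (rule UnI2)
qed

lemma gC: "is_graph C"
  unfolding is_graph_def
proof (intro conjI allI impI ballI)
  show "finite (verts C)" unfolding VC using gA gB unfolding is_graph_def by auto
  show "edges C \<subseteq> verts C \<times> verts C"
    unfolding EC using iotaA_V iotaB_V edgeA_V edgeB_V by fastforce
  fix x assume "x \<in> verts C"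
  then consider a where "a \<in> verts A - {eA}" "x = iA a" | b where "b \<in> verts B - {eB}" "x = iB b"
    unfolding VC by blast
  then show "(x,x) \<in> edges C"
  proof cases
    case 1
    then have "(a,a) \<in> edges A" "\<iota>A a = x" using reflA unfolding emb_def by auto
    then show ?thesis unfolding EC by force
  next
    case 2
    then have "(b,b) \<in> edges B" "\<iota>B b = x" using reflB unfolding emb_def by auto
    then show ?thesis unfolding EC by force
  qed
next
  fix x y assume "(x,y) \<in> edges C"
  then show "(y,x) \<in> edges C" unfolding EC using symA symB by auto
qed

lemma edge_f1: "(p,q) \<in> edges C \<Longrightarrow> (f1 p, f1 q) \<in> edges A"
proof -
  assume "(p,q) \<in> edges C"
  then consider x y where "(x,y) \<in> edges A" "p = \<iota>A x" "q = \<iota>A y"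
    | x y where "(x,y) \<in> edges B" "p = \<iota>B x" "q = \<iota>B y"
    unfolding EC by auto
  then show ?thesis
  proof cases
    case 1 then show ?thesis using f1_iotaA edgeA_V by simp
  next
    case 2
    then have xy: "x \<in> verts B" "y \<in> verts B" using edgeB_V by auto
    have "x = eB \<Longrightarrow> y \<noteq> eB \<Longrightarrow> y = b1" using leafB 2 by blast
    have "x \<noteq> eB \<Longrightarrow> y = eB \<Longrightarrow> x = b1" using leafB symB 2 by blast
    show ?thesis using 2 xy f1_iotaB reflA a1 eA eda symA by auto
  qed
qed

lemma lift_f1: "(p,q) \<in> edges C \<Longrightarrow> f1 p \<noteq> f1 q \<Longrightarrow> p = \<iota>A (f1 p) \<and> q = \<iota>A (f1 q)"
proof -
  assume e: "(p,q) \<in> edges C" and d: "f1 p \<noteq> f1 q"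
  from e consider x y where "(x,y) \<in> edges A" "p = \<iota>A x" "q = \<iota>A y"
    | x y where "(x,y) \<in> edges B" "p = \<iota>B x" "q = \<iota>B y"
    unfolding EC by auto
  then show ?thesis
  proof cases
    case 1 then show ?thesis using f1_iotaA edgeA_V by simp
  next
    case 2
    then have xy: "x \<in> verts B" "y \<in> verts B" using edgeB_V by auto
    have c1: "x = eB \<Longrightarrow> y \<noteq> eB \<Longrightarrow> y = b1" using leafB 2 by blast
    have c2: "x \<noteq> eB \<Longrightarrow> y = eB \<Longrightarrow> x = b1" using leafB symB 2 by blast
    have k1: "f1 (iA a1) = a1" using f1_iA a1 ea1 by simp
    have k2: "f1 (iB b1) = eA" using f1_iB b1 by simp
    have k3: "\<iota>A a1 = iA a1" "\<iota>A eA = iB b1" using ea1 unfolding emb_def by auto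
    consider "x = eB" "y \<noteq> eB" | "x \<noteq> eB" "y = eB" using d 2 xy f1_iotaB by fastforce
    then show ?thesis
    proof cases
      case 1
      then have yb: "y = b1" using c1 by simp
      have p: "p = iA a1" using 2(2) 1(1) unfolding emb_def by simp
      have q: "q = iB b1" using 2(3) yb eb1 unfolding emb_def by simp
      show ?thesis unfolding p q k1 k2 k3 by simp
    next
      case 3: 2
      then have xb: "x = b1" using c2 by simp
      have q: "q = iA a1" using 2(3) 3(2) unfolding emb_def by simp
      have p: "p = iB b1" using 2(2) xb eb1 unfolding emb_def by simp
      show ?thesis unfolding p q k1 k2 k3 by simp
    qed
  qed
qed

lemma fib_sing: "a \<in> verts A - {eA} \<Longrightarrow> fibre f1 C {a} = {iA a}"
proof -
  assume a: "a \<in> verts A - {eA}"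
  have "iA a \<in> verts C" unfolding VC using a by blast
  moreover have "n = iA a" if n: "n \<in> verts C" "f1 n = a" for n
  proof -
    from n(1) consider a' where "a' \<in> verts A - {eA}" "n = iA a'" | b where "b \<in> verts B - {eB}" "n = iB b"
      unfolding VC by blast
    then show ?thesis
    proof cases
      case 1 then show ?thesis using f1_iA[OF 1(1)] n(2) by simp
    next
      case 2 then show ?thesis using f1_iB[of b] n(2) a by simp
    qed
  qed
  moreover have "f1 (iA a) = a" using f1_iA[OF a] .
  ultimately show ?thesis unfolding fibre_def by blast
qed

lemma fib_eA: "fibre f1 C {eA} = iB ` (verts B - {eB})"
proof
  show "fibre f1 C {eA} \<subseteq> iB ` (verts B - {eB})"
  proof
    fix n assume "n \<in> fibre f1 C {eA}"
    then have n: "n \<in> verts C" "f1 n = eA" unfolding fibre_def by auto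
    from n(1) consider a' where "a' \<in> verts A - {eA}" "n = iA a'" | b where "b \<in> verts B - {eB}" "n = iB b"
      unfolding VC by blast
    then show "n \<in> iB ` (verts B - {eB})"
    proof cases
      case 1 then have False using f1_iA[OF 1(1)] n(2) by simp
      then show ?thesis ..
    next
      case 2 then show ?thesis by blast
    qed
  qed
  show "iB ` (verts B - {eB}) \<subseteq> fibre f1 C {eA}"
  proof
    fix n assume "n \<in> iB ` (verts B - {eB})"
    then obtain b where b: "b \<in> verts B - {eB}" "n = iB b" by blast
    then have "f1 n = eA" using f1_iB by simp
    moreover have "n \<in> verts C" unfolding VC using b by blast
    ultimately show "n \<in> fibre f1 C {eA}" unfolding fibre_def by simp
  qed
qed

lemma conn_B: "connected_in C (iB ` (verts B - {eB}))"
  unfolding connected_in_def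
proof (intro conjI ballI)
  show "iB ` (verts B - {eB}) \<subseteq> verts C" unfolding VC by blast
  fix x y assume x: "x \<in> iB ` (verts B - {eB})" and y: "y \<in> iB ` (verts B - {eB})"
  then obtain bx bq where b: "bx \<in> verts B - {eB}" "x = iB bx" "bq \<in> verts B - {eB}" "y = iB bq" by blast
  have cB: "connected_in B (verts B)" using tB unfolding is_tree_def by simp
  have b1': "b1 \<noteq> eB" using eb1 by simp
  have xy: "(bx,bq) \<in> (induced_rel B (verts B - {eB}))\<^sup>*"
    using leaf_removal[OF gB cB b1 b1' leafB b(1) b(3)] .
  have mm: "(iB p, iB q) \<in> induced_rel C (iB ` (verts B - {eB}))"
    if "(p,q) \<in> induced_rel B (verts B - {eB})" for p q
  proof -
    have pq: "p \<in> verts B - {eB}" "q \<in> verts B - {eB}" "(p,q) \<in> edges B" using that unfolding induced_rel_def by auto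
    then have "(\<iota>B p, \<iota>B q) \<in> edges C" unfolding EC by blast
    moreover have "\<iota>B p = iB p" "\<iota>B q = iB q" using pq unfolding emb_def by auto
    ultimately have "(iB p, iB q) \<in> edges C" by simp
    moreover have "iB p \<in> iB ` (verts B - {eB})" "iB q \<in> iB ` (verts B - {eB})" using pq by blast+
    ultimately show ?thesis unfolding induced_rel_def by simp
  qed
  from rtr_map[of "induced_rel B (verts B - {eB})" iB, OF mm xy]
  show "(x,y) \<in> (induced_rel C (iB ` (verts B - {eB})))\<^sup>*" using b by simp
qed

lemma nice1: "nice f1 C A"
proof (unfold_locales)
  show "is_graph C" by (rule gC)
  show "is_graph A" by (rule gA)
  show "uniq_lift f1 C" unfolding uniq_lift_def
  proof (intro allI impI)
    fix p q p' q' assume e1: "(p,q) \<in> edges C" and e2: "(p',q') \<in> edges C"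
      and h1: "f1 p = f1 p'" and h2: "f1 q = f1 q'" and d: "f1 p \<noteq> f1 q"
    have "p = \<iota>A (f1 p) \<and> q = \<iota>A (f1 q)" using lift_f1[OF e1 d] .
    moreover have "p' = \<iota>A (f1 p') \<and> q' = \<iota>A (f1 q')" using lift_f1[OF e2] d h1 h2 by simp
    ultimately show "p = p' \<and> q = q'" using h1 h2 by simp
  qed
  show "monotone_epi f1 C A" unfolding monotone_epi_def epimorphism_def
  proof (intro conjI ballI)
    show "f1 ` verts C = verts A"
    proof
      show "f1 ` verts C \<subseteq> verts A" using f1_V by blast
      show "verts A \<subseteq> f1 ` verts C"
      proof
        fix a assume a: "a \<in> verts A"
        then have "f1 (\<iota>A a) = a" "\<iota>A a \<in> verts C" using f1_iotaA iotaA_V by auto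
        then show "a \<in> f1 ` verts C" by (metis imageI)
      qed
    qed
    fix x y assume x: "x \<in> verts A" and y: "y \<in> verts A"
    show "((x, y) \<in> edges A) = (\<exists>b1\<in>verts C. \<exists>b2\<in>verts C. f1 b1 = x \<and> f1 b2 = y \<and> (b1, b2) \<in> edges C)"
    proof
      assume "(x,y) \<in> edges A"
      then have "(\<iota>A x, \<iota>A y) \<in> edges C" unfolding EC by blast
      then show "\<exists>b1\<in>verts C. \<exists>b2\<in>verts C. f1 b1 = x \<and> f1 b2 = y \<and> (b1, b2) \<in> edges C"
        using x y f1_iotaA[OF x] f1_iotaA[OF y] iotaA_V[OF x] iotaA_V[OF y] by blast
    next
      assume "\<exists>b1\<in>verts C. \<exists>b2\<in>verts C. f1 b1 = x \<and> f1 b2 = y \<and> (b1, b2) \<in> edges C"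
      then obtain c1 c2 where "f1 c1 = x" "f1 c2 = y" "(c1,c2) \<in> edges C" by blast
      then show "(x,y) \<in> edges A" using edge_f1 by metis
    qed
  next
    fix a assume a: "a \<in> verts A"
    show "connected_in C (fibre f1 C {a})"
    proof (cases "a = eA")
      case True then show ?thesis using fib_eA conn_B by simp
    next
      case False
      then have aa: "a \<in> verts A - {eA}" using a by simp
      have "fibre f1 C {a} = {iA a}" using fib_sing[OF aa] .
      moreover have "iA a \<in> verts C" unfolding VC using aa by blast
      ultimately show ?thesis unfolding connected_in_def by simp
    qed
  qed
qed

lemma connC: "connected_in C (verts C)"
proof -
  let ?R = "induced_rel C (verts C)"
  let ?r = "iA a1"
  have cA: "connected_in A (verts A)" using tA unfolding is_tree_def by simp
  have cB: "connected_in B (verts B)" using tB unfolding is_tree_def by simp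
  have allA: "\<forall>x\<in>verts A. \<forall>y\<in>verts A. (x, y) \<in> (induced_rel A (verts A))\<^sup>*" using cA unfolding connected_in_def by simp
  have allB: "\<forall>x\<in>verts B. \<forall>y\<in>verts B. (x, y) \<in> (induced_rel B (verts B))\<^sup>*" using cB unfolding connected_in_def by simp
  have mA: "(\<iota>A p, \<iota>A q) \<in> ?R" if "(p,q) \<in> induced_rel A (verts A)" for p q
  proof -
    have "(p,q) \<in> edges A" "p \<in> verts A" "q \<in> verts A" using that unfolding induced_rel_def by auto
    then show ?thesis unfolding induced_rel_def using iotaA_V edgeCA by simp
  qed
  have mB: "(\<iota>B p, \<iota>B q) \<in> ?R" if "(p,q) \<in> induced_rel B (verts B)" for p q
  proof -
    have "(p,q) \<in> edges B" "p \<in> verts B" "q \<in> verts B" using that unfolding induced_rel_def by auto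
    then show ?thesis unfolding induced_rel_def using iotaB_V edgeCB by simp
  qed
  have root: "(?r, n) \<in> ?R\<^sup>*" if n: "n \<in> verts C" for n
  proof -
    from n consider a where "a \<in> verts A - {eA}" "n = iA a" | b where "b \<in> verts B - {eB}" "n = iB b"
      unfolding VC by blast
    then show ?thesis
    proof cases
      case 1
      then have "(a1, a) \<in> (induced_rel A (verts A))\<^sup>*" using allA a1 by auto
      from rtr_map[of _ \<iota>A, OF mA this] show ?thesis using 1 ea1 unfolding emb_def by simp
    next
      case 2
      then have "(eB, b) \<in> (induced_rel B (verts B))\<^sup>*" using allB eB by auto
      from rtr_map[of _ \<iota>B, OF mB this] show ?thesis using 2 unfolding emb_def by simp
    qed
  qed
  have symR: "(y,x) \<in> ?R" if "(x,y) \<in> ?R" for x y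
    using that gC unfolding induced_rel_def is_graph_def by blast
  show ?thesis unfolding connected_in_def
  proof (intro conjI ballI)
    show "verts C \<subseteq> verts C" by simp
    fix x y assume "x \<in> verts C" "y \<in> verts C"
    then have "(?r, x) \<in> ?R\<^sup>*" "(?r, y) \<in> ?R\<^sup>*" using root by auto
    then have "(x, ?r) \<in> ?R\<^sup>*" "(?r, y) \<in> ?R\<^sup>*" using rtr_sym[of ?R, OF symR] by auto
    then show "(x,y) \<in> ?R\<^sup>*" by (rule rtrancl_trans)
  qed
qed

lemma neC: "verts C \<noteq> {}" unfolding VC using a1 ea1 by blast

lemma f1_collapse: "(u,v) \<in> edges C \<Longrightarrow> u \<noteq> v \<Longrightarrow> f1 u = f1 v \<Longrightarrow> u \<in> iB ` (verts B - {eB}) \<and> v \<in> iB ` (verts B - {eB})"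
proof -
  assume e: "(u,v) \<in> edges C" and d: "u \<noteq> v" and f: "f1 u = f1 v"
  have uv: "u \<in> verts C" "v \<in> verts C" using e graph_edge_verts[OF gC] by auto
  have "f1 u = eA"
  proof (rule ccontr)
    assume ne: "f1 u \<noteq> eA"
    have "f1 u \<in> verts A" using f1_V uv by blast
    then have "f1 u \<in> verts A - {eA}" using ne by simp
    from fib_sing[OF this] have "fibre f1 C {f1 u} = {iA (f1 u)}" .
    then have "u = iA (f1 u)" "v = iA (f1 u)" using uv f unfolding fibre_def by auto
    then show False using d by simp
  qed
  then have "u \<in> fibre f1 C {eA}" "v \<in> fibre f1 C {eA}" using uv f unfolding fibre_def by auto
  then show ?thesis using fib_eA by simp
qed

end


definition good :: "('b \<Rightarrow> 'a) \<Rightarrow> 'b graph \<Rightarrow> 'a graph \<Rightarrow> bool" where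
  "good f C A \<longleftrightarrow> monotone_epi f C A \<and> (\<forall>a\<in>verts A. ord A a \<ge> 3 \<longrightarrow> (\<exists>c. coherence_witness f C A a c))"

definition ordcov :: "'c graph \<Rightarrow> 'a graph \<Rightarrow> 'b graph \<Rightarrow> bool" where
  "ordcov C A B \<longleftrightarrow> (\<forall>n\<in>verts C. (\<exists>a\<in>verts A. ord C n = ord A a) \<or> (\<exists>b\<in>verts B. ord C n = ord B b))"

context glue_setup
begin

lemma f1_iA': "b \<in> verts B - {eB} \<Longrightarrow> proj B eB iB (iB b) = b"
  using glue_setup.f1_iA[OF swap] by simp

lemma noaltC: "no_alt C"
  unfolding no_alt_def
proof (intro allI impI)
  fix u v assume e: "(u,v) \<in> edges C" and d: "u \<noteq> v"
  have naA: "no_alt A" using no_cycle_no_alt gA tA unfolding is_tree_def by blast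
  have naB: "no_alt B" using no_cycle_no_alt gB tB unfolding is_tree_def by blast
  show "(v,u) \<notin> (avoid C u v)\<^sup>*"
  proof (cases "f1 u = f1 v")
    case False
    show ?thesis using nice.no_alt_transfer[OF nice1 naA e False] .
  next
    case True
    from f1_collapse[OF e d True] obtain bu bv where
      b: "bu \<in> verts B - {eB}" "u = iB bu" "bv \<in> verts B - {eB}" "v = iB bv" by blast
    have "proj B eB iB u \<noteq> proj B eB iB v" using f1_iA'[OF b(1)] f1_iA'[OF b(3)] b d by auto
    moreover have n2: "nice (proj B eB iB) C B"
      using glue_setup.nice1[OF swap] glue_sym[of B eB b1 iB A eA a1 iA] by simp
    ultimately show ?thesis using nice.no_alt_transfer[OF n2 naB e] by blast
  qed
qed

lemma treeC: "is_tree C"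
  unfolding is_tree_def using gC neC connC noaltC cycle_not_no_alt by blast

lemma ordC_A: "a \<in> verts A - {eA} \<Longrightarrow> ord C (iA a) = ord A a"
  using nice.ord_eq[OF nice1 _ fib_sing] by simp

lemma goodA: "good f1 C A"
  unfolding good_def
proof (intro conjI ballI impI)
  show "monotone_epi f1 C A" using nice1 unfolding nice_def by simp
  fix a assume a: "a \<in> verts A" and o3: "3 \<le> ord A a"
  have "ord A eA = 1" using leaf_ord[OF gA ea1 eda leafA] .
  then have "a \<noteq> eA" using o3 by auto
  then have aa: "a \<in> verts A - {eA}" using a by simp
  show "\<exists>c. coherence_witness f1 C A a c" using nice.coh[OF nice1 a fib_sing[OF aa]] by blast
qed

lemma ordcovC: "ordcov C A B"
  unfolding ordcov_def
proof
  fix n assume "n \<in> verts C"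
  then consider a where "a \<in> verts A - {eA}" "n = iA a" | b where "b \<in> verts B - {eB}" "n = iB b"
    unfolding VC by blast
  then show "(\<exists>a\<in>verts A. ord C n = ord A a) \<or> (\<exists>b\<in>verts B. ord C n = ord B b)"
  proof cases
    case 1 then show ?thesis using ordC_A[OF 1(1)] by blast
  next
    case 2
    have "ord C (iB b) = ord B b"
      using glue_setup.ordC_A[OF swap 2(1)] glue_sym[of B eB b1 iB A eA a1 iA] by simp
    then show ?thesis using 2 by blast
  qed
qed

lemma goodB: "good (proj B eB iB) C B"
  using glue_setup.goodA[OF swap] glue_sym[of B eB b1 iB A eA a1 iA] by simp

end

lemma joint2:
  fixes A :: "'a graph" and B :: "'b graph"
  assumes tA: "is_tree A" and tB: "is_tree B"
    and A2: "\<exists>u\<in>verts A. \<exists>v\<in>verts A. u \<noteq> v" and B2: "\<exists>u\<in>verts B. \<exists>v\<in>verts B. u \<noteq> v"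
  shows "\<exists>(C :: nat graph) f1 f2. is_tree C \<and> ordcov C A B \<and> good f1 C A \<and> good f2 C B"
proof -
  obtain eA a1 where la: "eA \<in> verts A" "a1 \<in> verts A" "eA \<noteq> a1" "(eA,a1) \<in> edges A"
    "\<forall>x. (eA,x) \<in> edges A \<longrightarrow> x = eA \<or> x = a1"
    using leaf_exists[OF tA] A2 by blast
  obtain eB b1 where lb: "eB \<in> verts B" "b1 \<in> verts B" "eB \<noteq> b1" "(eB,b1) \<in> edges B"
    "\<forall>x. (eB,x) \<in> edges B \<longrightarrow> x = eB \<or> x = b1"
    using leaf_exists[OF tB] B2 by blast
  have fA: "finite (verts A)" and fB: "finite (verts B)"
    using tA tB unfolding is_tree_def is_graph_def by auto
  obtain hA :: "'a \<Rightarrow> nat" where hA: "inj_on hA (verts A)" using finite_imp_inj_to_nat_seg[OF fA] by blast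
  obtain hB :: "'b \<Rightarrow> nat" where hB: "inj_on hB (verts B)" using finite_imp_inj_to_nat_seg[OF fB] by blast
  define iA where "iA = (\<lambda>a. 2 * hA a)"
  define iB where "iB = (\<lambda>b. 2 * hB b + 1)"
  have iA: "inj_on iA (verts A)" using hA unfolding iA_def inj_on_def by auto
  have iB: "inj_on iB (verts B)" using hB unfolding iB_def inj_on_def by auto
  have dj: "iA ` verts A \<inter> iB ` verts B = {}" unfolding iA_def iB_def by auto presburger
  have gs: "glue_setup A eA a1 iA B eB b1 iB"
    unfolding glue_setup_def using tA tB la lb iA iB dj by blast
  show ?thesis
    using glue_setup.treeC[OF gs] glue_setup.ordcovC[OF gs] glue_setup.goodA[OF gs] glue_setup.goodB[OF gs]
    by blast
qed

lemma const_good: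
  assumes tC: "is_tree C" and gA: "is_graph A" and VA: "verts A = {a0}"
  shows "good (\<lambda>_. a0) C A"
  unfolding good_def
proof (intro conjI ballI impI)
  have gC: "is_graph C" and neC: "verts C \<noteq> {}" and cC: "connected_in C (verts C)"
    using tC unfolding is_tree_def by auto
  obtain c where c: "c \<in> verts C" using neC by blast
  have cc: "(c,c) \<in> edges C" using gC c unfolding is_graph_def by blast
  have aa: "(a0,a0) \<in> edges A" using gA VA unfolding is_graph_def by blast
  show "monotone_epi (\<lambda>_. a0) C A" unfolding monotone_epi_def epimorphism_def
  proof (intro conjI ballI)
    show "(\<lambda>_. a0) ` verts C = verts A" using VA neC by auto
    fix x y assume "x \<in> verts A" "y \<in> verts A"
    then have "x = a0" "y = a0" using VA by auto
    then show "((x, y) \<in> edges A) = (\<exists>b1\<in>verts C. \<exists>b2\<in>verts C. a0 = x \<and> a0 = y \<and> (b1, b2) \<in> edges C)"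
      using aa c cc by blast
  next
    fix a assume "a \<in> verts A"
    then have "fibre (\<lambda>_. a0) C {a} = verts C" using VA unfolding fibre_def by auto
    then show "connected_in C (fibre (\<lambda>_. a0) C {a})" using cC by simp
  qed
  fix a assume "a \<in> verts A" and o3: "3 \<le> ord A a"
  have "ord A a = 0" unfolding ord_def using VA \<open>a \<in> verts A\<close> by auto
  with o3 show "\<exists>c. coherence_witness (\<lambda>_. a0) C A a c" by simp
qed

lemma single_tree: "is_tree ({0::nat}, {(0,0)})"
  unfolding is_tree_def is_graph_def connected_in_def has_cycle_def verts_def edges_def
proof (intro conjI allI impI ballI notI; (elim exE conjE)?)
  fix vs :: "nat list" assume "3 \<le> length vs" "distinct vs" "set vs \<subseteq> fst ({0::nat}, {(0::nat,0::nat)})"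
  then have "card (set vs) \<le> 1" using card_mono[of "{0::nat}" "set vs"] by simp
  then show False using \<open>distinct vs\<close> \<open>3 \<le> length vs\<close> distinct_card by fastforce
qed (auto simp: induced_rel_def edges_def)

lemma single_vert: "is_tree A \<Longrightarrow> \<not>(\<exists>u\<in>verts A. \<exists>v\<in>verts A. u \<noteq> v) \<Longrightarrow> \<exists>a0. verts A = {a0}"
  unfolding is_tree_def by blast

lemma ord_single: "verts A = {a0} \<Longrightarrow> ord A a0 = 0"
  unfolding ord_def by auto

lemma joint_all:
  fixes A :: "'a graph" and B :: "'b graph"
  assumes tA: "is_tree A" and tB: "is_tree B"
  shows "\<exists>(C :: nat graph) f1 f2. is_tree C \<and> ordcov C A B \<and> good f1 C A \<and> good f2 C B"
proof -
  have gA: "is_graph A" and gB: "is_graph B" using tA tB unfolding is_tree_def by auto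
  show ?thesis
  proof (cases "\<exists>u\<in>verts A. \<exists>v\<in>verts A. u \<noteq> v")
    case A2: True
    show ?thesis
    proof (cases "\<exists>u\<in>verts B. \<exists>v\<in>verts B. u \<noteq> v")
      case True then show ?thesis using joint2[OF tA tB A2] by blast
    next
      case False
      then obtain b0 where b0: "verts B = {b0}" using single_vert[OF tB] by blast
      obtain C :: "nat graph" and g1 g2 where C: "is_tree C" "ordcov C A A" "good g1 C A"
        using joint2[OF tA tA A2 A2] by blast
      have "ordcov C A B" using C(2) unfolding ordcov_def by blast
      then show ?thesis using C const_good[OF C(1) gB b0] by blast
    qed
  next
    case A1: False
    then obtain a0 where a0: "verts A = {a0}" using single_vert[OF tA] by blast
    show ?thesis
    proof (cases "\<exists>u\<in>verts B. \<exists>v\<in>verts B. u \<noteq> v")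
      case True
      obtain C :: "nat graph" and g1 g2 where C: "is_tree C" "ordcov C B B" "good g1 C B"
        using joint2[OF tB tB True True] by blast
      have "ordcov C A B" using C(2) unfolding ordcov_def by blast
      then show ?thesis using C const_good[OF C(1) gA a0] by blast
    next
      case False
      then obtain b0 where b0: "verts B = {b0}" using single_vert[OF tB] by blast
      let ?C = "({0::nat}, {(0::nat,0::nat)})"
      have vc: "verts ?C = {0}" unfolding verts_def by simp
      have "ord ?C 0 = 0" using ord_single[OF vc] .
      then have "ordcov ?C A B" unfolding ordcov_def using vc a0 ord_single[OF a0] by auto
      then show ?thesis using single_tree const_good[OF single_tree gA a0] const_good[OF single_tree gB b0] by blast
    qed
  qed
qed


lemma coh_weak: "coherence_witness f C A a c \<Longrightarrow> weak_coherence_witness f C A a c"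
  unfolding coherence_witness_def weak_coherence_witness_def
  by (metis bij_betw_imp_inj_on bij_betw_imp_surj_on order_refl)

lemma good_F: "good f C A \<Longrightarrow> F_mor P f C A"
  unfolding good_def F_mor_def
proof (intro conjI ballI impI; (elim conjE)?)
  fix a assume m: "monotone_epi f C A" and h: "\<forall>a\<in>verts A. 3 \<le> ord A a \<longrightarrow> (\<exists>c. coherence_witness f C A a c)"
    and a: "a \<in> verts A" and o3: "3 \<le> ord A a"
  obtain c where c: "coherence_witness f C A a c" using h a o3 by blast
  show "point_of_coherence f C A a" using c unfolding point_of_coherence_def by blast
  assume np: "enat (ord A a) \<notin> P"
  have "ord C c = ord A a" using c unfolding coherence_witness_def by simp
  then show "\<exists>b. weak_coherence_witness f C A a b \<and> enat (ord C b) \<notin> P"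
    using coh_weak[OF c] np by auto
qed (simp)

lemma good_G: "good f C A \<Longrightarrow> G_mor P f C A"
  unfolding good_def G_mor_def coherent_def point_of_coherence_def by blast

theorem mainTheorem4:
  fixes P :: "enat set"
  assumes "\<forall>x\<in>P. x \<ge> 3"
  shows "(\<infinity> \<in> P \<longrightarrow>
           (\<forall>(A :: 'a graph) (B :: 'b graph). F_obj P A \<and> F_obj P B \<longrightarrow>
              (\<exists>(C :: nat graph) f1 f2. F_obj P C \<and> F_mor P f1 C A \<and> F_mor P f2 C B)))
       \<and> (\<infinity> \<notin> P \<longrightarrow>
           (\<forall>(A :: 'a graph) (B :: 'b graph). G_obj P A \<and> G_obj P B \<longrightarrow>
              (\<exists>(C :: nat graph) f1 f2. G_obj P C \<and> G_mor P f1 C A \<and> G_mor P f2 C B)))"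
proof (intro conjI impI allI; elim conjE)
  fix A :: "'a graph" and B :: "'b graph"
  assume FA: "F_obj P A" and FB: "F_obj P B"
  then have "is_tree A" "is_tree B" unfolding F_obj_def by auto
  from joint_all[OF this] obtain C :: "nat graph" and f1 f2 where
    C: "is_tree C" "ordcov C A B" "good f1 C A" "good f2 C B" by blast
  have "F_obj P C" unfolding F_obj_def
  proof (intro conjI ballI)
    show "is_tree C" by (rule C(1))
    fix n assume "n \<in> verts C"
    then show "ord C n \<noteq> 2" using C(2) FA FB unfolding ordcov_def F_obj_def by metis
  qed
  then show "\<exists>(C :: nat graph) f1 f2. F_obj P C \<and> F_mor P f1 C A \<and> F_mor P f2 C B"
    using good_F[OF C(3)] good_F[OF C(4)] by blast
next
  fix A :: "'a graph" and B :: "'b graph"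
  assume GA: "G_obj P A" and GB: "G_obj P B"
  then have "is_tree A" "is_tree B" unfolding G_obj_def by auto
  from joint_all[OF this] obtain C :: "nat graph" and f1 f2 where
    C: "is_tree C" "ordcov C A B" "good f1 C A" "good f2 C B" by blast
  have "G_obj P C" unfolding G_obj_def
  proof (intro conjI ballI)
    show "is_tree C" by (rule C(1))
    fix n assume "n \<in> verts C"
    then show "ord C n \<le> 1 \<or> enat (ord C n) \<in> P" using C(2) GA GB unfolding ordcov_def G_obj_def by metis
  qed
  then show "\<exists>(C :: nat graph) f1 f2. G_obj P C \<and> G_mor P f1 C A \<and> G_mor P f2 C B"
    using good_G[OF C(3)] good_G[OF C(4)] by blast
qed


end
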